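(* Let $p>q>1$ be relatively prime integers. For every $h\ge 0$, the set $\{w^{-1}L_{\frac pq}\cap A_p^h \mid w\in L_{\frac pq}\setminus\{\varepsilon\}\}$ is a partition of $A_p^h$ into $q^h$ non-empty languages.
   Context: $A_p=\{0,\ldots,p-1\}$. For $w=w_\ell\cdots w_0\in A_p^*$, $\mathrm{val}_{\frac pq}(w)=\sum_{i=0}^{\ell}\frac{w_i}{q}\left(\frac pq\right)^i$. Every integer $n\ge0$ has a unique representation $\mathrm{rep}_{\frac pq}(n)\in A_p^*$ not starting with $0$ with value $n$ ($\mathrm{rep}_{\frac pq}(0)=\varepsilon$), and $L_{\frac pq}=\{\mathrm{rep}_{\frac pq}(n): n\ge 0\}$. For a word $w$, $w^{-1}L=\{u: wu\in L\}$. *)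

theory Defs
  imports Complex_Main "HOL-Library.Disjoint_Sets"
begin

text \<open>Words are lists of digits, most significant digit first:
  the list [w_l, ..., w_0] represents w = w_l ... w_0.\<close>

definition alph :: "nat \<Rightarrow> nat set" where
  "alph p = {0..<p}"

definition val_pq :: "nat \<Rightarrow> nat \<Rightarrow> nat list \<Rightarrow> real" where
  "val_pq p q w = (\<Sum>i<length w. real (rev w ! i) / real q * (real p / real q) ^ i)"

definition rep_pq :: "nat \<Rightarrow> nat \<Rightarrow> nat \<Rightarrow> nat list" where
  "rep_pq p q n = (THE w. w \<in> lists (alph p) \<and> (w = [] \<or> hd w \<noteq> 0) \<and> val_pq p q w = real n)"

definition L_pq :: "nat \<Rightarrow> nat \<Rightarrow> nat list set" where
  "L_pq p q = range (rep_pq p q)"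

definition left_quot :: "'a list \<Rightarrow> 'a list set \<Rightarrow> 'a list set" where
  "left_quot w L = {u. w @ u \<in> L}"

definition words_len :: "nat \<Rightarrow> nat \<Rightarrow> nat list set" where
  "words_len p h = {u. u \<in> lists (alph p) \<and> length u = h}"

end

theory Submission
  imports Defs "HOL-Number_Theory.Number_Theory"
begin

function rr :: "nat \<Rightarrow> nat \<Rightarrow> nat \<Rightarrow> nat list" where
  "rr p q n = (if n = 0 \<or> p \<le> q then [] else rr p q (q*n div p) @ [q*n mod p])"
  by auto
termination
proof (relation "measure (\<lambda>(p,q,n). n)")
  fix p q n :: nat
  assume a: "\<not> (n = 0 \<or> p \<le> q)"
  have "q*n < p*n" using a by auto
  then have "q*n div p < n" using a by (simp add: div_less_iff_less_mult mult.commute)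
  then show "((p, q, q * n div p), p, q, n) \<in> measure (\<lambda>(p, q, n). n)" by simp
qed auto

declare rr.simps[simp del]

lemma val_snoc: "val_pq p q (w @ [a]) = real a / real q + (real p / real q) * val_pq p q w"
proof -
  have "val_pq p q (w @ [a]) = (\<Sum>i<Suc (length w). real ((a # rev w) ! i) / real q * (real p / real q) ^ i)"
    by (simp add: val_pq_def)
  also have "\<dots> = real a / real q + (\<Sum>i<length w. real (rev w ! i) / real q * (real p / real q) ^ Suc i)"
    by (subst sum.lessThan_Suc_shift) simp
  also have "\<dots> = real a / real q + (real p / real q) * val_pq p q w"
    by (simp add: val_pq_def sum_distrib_left mult_ac)
  finally show ?thesis .
qed

lemma val_nil[simp]: "val_pq p q [] = 0" by (simp add: val_pq_def)

lemma val_nonneg: "val_pq p q w \<ge> 0"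
  by (simp add: val_pq_def sum_nonneg)

lemma val_zero:
  assumes "q > 0" "p > 0" "val_pq p q w = 0" "w \<noteq> []" "hd w \<noteq> 0"
  shows False
proof -
  have fin: "finite {..<length w}" by simp
  define f where "f = (\<lambda>i. real (rev w ! i) / real q * (real p / real q) ^ i)"
  have nn: "\<And>i. i \<in> {..<length w} \<Longrightarrow> 0 \<le> f i" unfolding f_def by simp
  have "sum f {..<length w} = 0" using assms(3) by (simp add: val_pq_def f_def)
  then have "\<forall>i\<in>{..<length w}. f i = 0"
    using sum_nonneg_eq_0_iff[of "{..<length w}" f] nn by simp
  moreover have "length w - 1 \<in> {..<length w}" using assms(4) by simp
  ultimately have "f (length w - 1) = 0" by blast
  then have "real (rev w ! (length w - 1)) / real q * (real p / real q) ^ (length w - 1) = 0"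
    unfolding f_def .
  moreover have "rev w ! (length w - 1) = hd w" using assms(4)
    by (simp add: rev_nth hd_conv_nth)
  ultimately show False using assms by simp
qed

lemma val_int: "\<exists>N::nat. val_pq p q u * real q ^ length u = real N"
proof (induction u rule: rev_induct)
  case Nil then show ?case by simp
next
  case (snoc a u)
  then obtain N where N: "val_pq p q u * real q ^ length u = real N" by auto
  show ?case
  proof (cases "q = 0")
    case True then show ?thesis by (simp add: val_pq_def)
  next
    case False
    have "val_pq p q (u @ [a]) * real q ^ length (u @ [a]) = real (a * q ^ length u + p * N)"
      using False by (simp add: val_snoc N[symmetric] field_simps)
    then show ?thesis by blast
  qed
qed

fun okc :: "nat \<Rightarrow> nat \<Rightarrow> nat \<Rightarrow> nat list \<Rightarrow> bool" where
  "okc p q n [] = True"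
| "okc p q n (a # u) = (a < p \<and> q dvd p*n + a \<and> okc p q ((p*n + a) div q) u)"

fun NN :: "nat \<Rightarrow> nat \<Rightarrow> nat list \<Rightarrow> nat" where
  "NN p q [] = 0"
| "NN p q (a # u) = q * NN p q u + a * p ^ length u"

lemma arith_key:
  fixes p q n a h N :: nat
  assumes q: "q > 0" and cp: "coprime p q"
  shows "(q dvd p*n+a \<and> q^h dvd p^h*((p*n+a) div q) + N) \<longleftrightarrow> q^Suc h dvd p^Suc h * n + (q*N + a*p^h)"
proof -
  have X: "p^Suc h * n + (q*N + a*p^h) = p^h * (p*n+a) + q*N" by (simp add: algebra_simps)
  have Q: "q^Suc h = q * q^h" by simp
  show ?thesis
  proof
    assume A: "q dvd p*n+a \<and> q^h dvd p^h*((p*n+a) div q) + N"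
    then obtain m where m: "p*n+a = q*m" by (auto simp: dvd_def)
    have md: "(p*n+a) div q = m" using m q by simp
    have "p^Suc h * n + (q*N + a*p^h) = q * (p^h*m + N)"
      unfolding X m by (simp add: algebra_simps)
    moreover have "q^h dvd p^h*m + N" using A md by simp
    then have "q*q^h dvd q * (p^h*m + N)" by (rule mult_dvd_mono[OF dvd_refl])
    ultimately show "q^Suc h dvd p^Suc h * n + (q*N + a*p^h)" unfolding Q by simp
  next
    assume B: "q^Suc h dvd p^Suc h * n + (q*N + a*p^h)"
    have "q dvd q^Suc h" unfolding Q by (rule dvd_triv_left)
    then have "q dvd p^h * (p*n+a) + q*N" using B X dvd_trans by metis
    then have "q dvd p^h * (p*n+a)" by (simp add: dvd_add_left_iff)
    moreover have "coprime q (p^h)" using cp by (simp add: coprime_commute)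
    ultimately have d: "q dvd p*n+a" using coprime_dvd_mult_right_iff by blast
    then obtain m where m: "p*n+a = q*m" by (auto simp: dvd_def)
    have md: "(p*n+a) div q = m" using m q by simp
    have "p^Suc h * n + (q*N + a*p^h) = q * (p^h*m + N)"
      unfolding X m by (simp add: algebra_simps)
    then have "q * q^h dvd q * (p^h*m + N)" using B unfolding Q by simp
    then have "q^h dvd p^h*m + N" using q nat_mult_dvd_cancel1 by blast
    then show "q dvd p*n+a \<and> q^h dvd p^h*((p*n+a) div q) + N" using d md by simp
  qed
qed

lemma dvd_fill: "(q::nat) > 0 \<Longrightarrow> q dvd (x + (q - x mod q) mod q)"
proof -
  assume q: "q > 0"
  define r where "r = x mod q"
  have x: "x = q*(x div q) + r" unfolding r_def by simp
  have rq: "r < q" unfolding r_def using q by simp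
  show ?thesis
  proof (cases "r = 0")
    case True
    then show ?thesis unfolding r_def by (simp add: dvd_eq_mod_eq_0)
  next
    case False
    then have "(q - r) mod q = q - r" using rq by simp
    then have "x + (q - x mod q) mod q = q*(x div q + 1)"
      unfolding r_def[symmetric] using x rq by simp
    then show ?thesis by simp
  qed
qed

definition CC :: "nat \<Rightarrow> nat \<Rightarrow> nat \<Rightarrow> nat \<Rightarrow> nat list set" where
  "CC p q h n = {u \<in> words_len p h. q^h dvd p^h*n + NN p q u}"

locale rb =
  fixes p q :: nat
  assumes q1: "q > 1" and pq: "p > q" and cop: "coprime p q"
begin

lemma p0: "p > 0" using q1 pq by simp

lemma rr_eq: "n > 0 \<Longrightarrow> rr p q n = rr p q (q*n div p) @ [q*n mod p]"
  using pq by (subst rr.simps) auto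

lemma rr_0[simp]: "rr p q 0 = []" by (subst rr.simps) auto

lemma rr_nil_iff[simp]: "rr p q n = [] \<longleftrightarrow> n = 0"
  by (cases "n = 0") (auto simp: rr_eq)

lemma rr_props: "rr p q n \<in> lists (alph p) \<and> (rr p q n = [] \<or> hd (rr p q n) \<noteq> 0) \<and> val_pq p q (rr p q n) = real n"
proof (induction n rule: less_induct)
  case (less n)
  show ?case
  proof (cases "n = 0")
    case True then show ?thesis by simp
  next
    case False
    let ?m = "q*n div p" and ?a = "q*n mod p"
    have "q*n < p*n" using False pq by auto
    then have lt: "?m < n" using p0 by (simp add: div_less_iff_less_mult mult.commute)
    note IH = less[OF lt]
    have e: "rr p q n = rr p q ?m @ [?a]" using False rr_eq by simp
    have A: "rr p q n \<in> lists (alph p)" using IH p0 by (simp add: e alph_def)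
    have B: "hd (rr p q n) \<noteq> 0"
    proof (cases "?m = 0")
      case True
      then have "q*n < p" using p0 by (simp add: div_eq_0_iff)
      then have "?a = q*n" by simp
      then show ?thesis using True False q1 by (simp add: e)
    next
      case False
      then show ?thesis using IH by (simp add: e)
    qed
    have "real (q*n) = real (p * ?m + ?a)" by simp
    then have C: "real q * real n = real p * real ?m + real ?a" by (metis of_nat_add of_nat_mult)
    have "val_pq p q (rr p q n) = real ?a / real q + (real p / real q) * real ?m"
      using IH by (simp add: e val_snoc)
    also have "\<dots> = real n" using q1 C by (simp add: field_simps)
    finally show ?thesis using A B by simp
  qed
qed

lemma rr_unique:
  "w \<in> lists (alph p) \<Longrightarrow> (w = [] \<or> hd w \<noteq> 0) \<Longrightarrow> val_pq p q w = real n \<Longrightarrow> w = rr p q n"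
proof (induction n arbitrary: w rule: less_induct)
  case (less n)
  show ?case
  proof (cases "n = 0")
    case True
    then show ?thesis using less.prems val_zero[of q p w] q1 p0 by auto
  next
    case False
    then have "w \<noteq> []" using less.prems by auto
    then obtain u a where w: "w = u @ [a]" by (metis rev_exhaust)
    have a: "a < p" using less.prems w by (auto simp: alph_def)
    have vw: "real n = real a / real q + (real p / real q) * val_pq p q u"
      using less.prems w by (simp add: val_snoc)
    then have v1: "real p * val_pq p q u = real q * real n - real a" using q1 by (simp add: field_simps)
    obtain N where N: "val_pq p q u * real q ^ length u = real N" using val_int by blast
    have "real p * real N = (real q * real n - real a) * real q ^ length u"
      by (simp add: N[symmetric] v1[symmetric])
    then have "real_of_int (int p * int N) = real_of_int ((int q * int n - int a) * int q ^ length u)"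
      by simp
    then have I: "int p * int N = (int q * int n - int a) * int q ^ length u"
      by (rule of_int_eq_iff[THEN iffD1])
    have "int p dvd (int q * int n - int a) * int q ^ length u" unfolding I[symmetric] by simp
    moreover have "coprime (int p) (int q ^ length u)" using cop by simp
    ultimately have "int p dvd int q * int n - int a" using coprime_dvd_mult_left_iff by blast
    then obtain k where k: "int q * int n - int a = int p * k" by (auto simp: dvd_def)
    have "k \<ge> 0"
    proof -
      have "real p * val_pq p q u \<ge> 0" using val_nonneg by simp
      moreover have "real_of_int (int q * int n - int a) = real q * real n - real a" by simp
      ultimately have "real_of_int (int p * k) \<ge> 0" using v1 k by metis
      then show ?thesis using p0 by (simp add: zero_le_mult_iff)
    qed
    define m where "m = nat k"
    have "int (q*n) = int (p*m + a)" using k \<open>k \<ge> 0\<close> unfolding m_def by simp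
    then have qn: "q*n = p*m + a" by (simp only: of_nat_eq_iff)
    have vu: "val_pq p q u = real m"
    proof -
      have "real (q*n) = real (p*m + a)" using qn by simp
      then have "real p * val_pq p q u = real p * real m" using v1 by simp
      then show ?thesis using p0 by simp
    qed
    have "p*m \<le> q*n" using qn by simp
    also have "\<dots> < p*n" using pq False by simp
    finally have lt: "m < n" by simp
    have u1: "u \<in> lists (alph p)" using less.prems w by simp
    have u2: "u = [] \<or> hd u \<noteq> 0" using less.prems w by (cases u) auto
    have "u = rr p q m" using less.IH[OF lt u1 u2 vu] .
    moreover have "q*n div p = m" "q*n mod p = a" using qn a p0 by auto
    ultimately show ?thesis using rr_eq[of n] False w by simp
  qed
qed

lemma rep_eq: "rep_pq p q n = rr p q n"
  unfolding rep_pq_def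
proof (rule the_equality)
  show "rr p q n \<in> lists (alph p) \<and> (rr p q n = [] \<or> hd (rr p q n) \<noteq> 0) \<and> val_pq p q (rr p q n) = real n"
    by (rule rr_props)
next
  fix w assume "w \<in> lists (alph p) \<and> (w = [] \<or> hd w \<noteq> 0) \<and> val_pq p q w = real n"
  then show "w = rr p q n" using rr_unique by blast
qed

lemma L_eq: "L_pq p q = range (rr p q)"
  unfolding L_pq_def rep_eq ..

lemma rr_inj: "rr p q m = rr p q n \<Longrightarrow> m = n"
proof -
  assume e: "rr p q m = rr p q n"
  have "real m = val_pq p q (rr p q m)" using rr_props[of m] by simp
  also have "\<dots> = real n" using e rr_props[of n] by simp
  finally show "m = n" by simp
qed

lemma snoc_in: "v @ [a] = rr p q m \<Longrightarrow> v = rr p q (q*m div p) \<and> a = q*m mod p \<and> m > 0"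
proof -
  assume A: "v @ [a] = rr p q m"
  then have "m \<noteq> 0" by (cases "m = 0") auto
  then show ?thesis using A rr_eq[of m] by simp
qed

lemma prefix_closed: "v @ u \<in> range (rr p q) \<Longrightarrow> v \<in> range (rr p q)"
proof (induction u rule: rev_induct)
  case Nil then show ?case by simp
next
  case (snoc a u)
  then obtain m where "(v @ u) @ [a] = rr p q m" by auto
  then have "v @ u = rr p q (q*m div p)" using snoc_in by blast
  then show ?case using snoc.IH by auto
qed

lemma child_pos: "n > 0 \<Longrightarrow> (p*n+a) div q > 0"
proof -
  assume "n > 0"
  then have "p \<le> p*n" by simp
  then have "q \<le> p*n+a" using pq by linarith
  then show ?thesis using q1 by (simp add: div_greater_zero_iff)
qed

lemma child_fwd: "rr p q n @ [a] \<in> range (rr p q) \<Longrightarrow> a < p \<and> q dvd p*n + a"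
proof -
  assume "rr p q n @ [a] \<in> range (rr p q)"
  then obtain m where "rr p q n @ [a] = rr p q m" by auto
  then have e: "rr p q n = rr p q (q*m div p)" "a = q*m mod p" using snoc_in by blast+
  then have "n = q*m div p" using rr_inj e(1) by blast
  then have qm: "q*m = p*n + a" using e(2) by simp
  have "q dvd p*n + a" unfolding qm[symmetric] by simp
  moreover have "a < p" using e(2) p0 by simp
  ultimately show ?thesis by simp
qed

lemma child_bwd: "n > 0 \<Longrightarrow> a < p \<Longrightarrow> q dvd p*n + a \<Longrightarrow> rr p q n @ [a] = rr p q ((p*n+a) div q)"
proof -
  assume n: "n > 0" and a: "a < p" and d: "q dvd p*n + a"
  define m where "m = (p*n+a) div q"
  have m0: "m > 0" using child_pos[OF n] m_def by simp
  have qm: "q*m = p*n+a" using d m_def by simp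
  have d1: "q*m div p = n" and d2: "q*m mod p = a" using qm a p0 by auto
  have "rr p q m = rr p q (q*m div p) @ [q*m mod p]" by (rule rr_eq[OF m0])
  also have "\<dots> = rr p q n @ [a]" unfolding d1 d2 ..
  finally show ?thesis unfolding m_def by simp
qed

lemma ok_iff: "n > 0 \<Longrightarrow> (rr p q n @ u \<in> range (rr p q)) \<longleftrightarrow> okc p q n u"
proof (induction u arbitrary: n)
  case Nil then show ?case by simp
next
  case (Cons a u)
  show ?case
  proof
    assume A: "rr p q n @ a # u \<in> range (rr p q)"
    then have "rr p q n @ [a] \<in> range (rr p q)" using prefix_closed[of "rr p q n @ [a]" u] by simp
    then have c: "a < p \<and> q dvd p*n + a" using child_fwd by blast
    then have eq: "rr p q n @ [a] = rr p q ((p*n+a) div q)" using child_bwd Cons.prems by blast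
    have e2: "rr p q n @ a # u = rr p q ((p*n+a) div q) @ u" by (simp add: eq[symmetric])
    have "okc p q ((p*n+a) div q) u" using Cons.IH[OF child_pos[OF Cons.prems, of a]] A unfolding e2 by simp
    then show "okc p q n (a # u)" using c by simp
  next
    assume B: "okc p q n (a # u)"
    then have c: "a < p" "q dvd p*n + a" "okc p q ((p*n+a) div q) u" by auto
    then have eq: "rr p q n @ [a] = rr p q ((p*n+a) div q)" using child_bwd Cons.prems by blast
    have e2: "rr p q n @ a # u = rr p q ((p*n+a) div q) @ u" by (simp add: eq[symmetric])
    show "rr p q n @ a # u \<in> range (rr p q)" unfolding e2 using Cons.IH[OF child_pos[OF Cons.prems, of a]] c by simp
  qed
qed

lemma ok_dvd: "okc p q n u \<longleftrightarrow> set u \<subseteq> {..<p} \<and> q^length u dvd p^length u * n + NN p q u"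
proof (induction u arbitrary: n)
  case Nil then show ?case by simp
next
  case (Cons a u)
  have 1: "okc p q n (a # u) \<longleftrightarrow> a < p \<and> q dvd p*n+a \<and> (set u \<subseteq> {..<p} \<and> q^length u dvd p^length u*((p*n+a) div q) + NN p q u)"
    by (simp only: okc.simps Cons.IH)
  have K: "(q dvd p*n+a \<and> q^length u dvd p^length u*((p*n+a) div q) + NN p q u) \<longleftrightarrow> q^Suc (length u) dvd p^Suc (length u) * n + (q*NN p q u + a*p^length u)"
    using q1 cop by (intro arith_key) auto
  have S: "set (a # u) \<subseteq> {..<p} \<longleftrightarrow> a < p \<and> set u \<subseteq> {..<p}" by simp
  show ?case unfolding S length_Cons NN.simps using 1 K by blast
qed

lemma ok_exists: "n > 0 \<Longrightarrow> \<exists>u. length u = h \<and> okc p q n u"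
proof (induction h arbitrary: n)
  case 0 then show ?case by simp
next
  case (Suc h)
  define a where "a = (q - (p*n) mod q) mod q"
  have "a < q" unfolding a_def using q1 by simp
  then have a: "a < p" using pq by simp
  have d: "q dvd p*n + a" unfolding a_def using dvd_fill q1 by simp
  obtain u where u: "length u = h" "okc p q ((p*n+a) div q) u"
    using Suc.IH[OF child_pos[OF Suc.prems, of a]] by blast
  have "okc p q n (a # u)" using a d u(2) by (simp only: okc.simps)
  then show ?case using u(1) by (intro exI[of _ "a # u"]) simp
qed


lemma W_set: "u \<in> words_len p h \<Longrightarrow> set u \<subseteq> {..<p} \<and> length u = h"
  by (auto simp: words_len_def alph_def)

lemma quot_eq:
  assumes n: "n > 0"
  shows "left_quot (rr p q n) (L_pq p q) \<inter> words_len p h = CC p q h n"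
proof -
  have "u \<in> left_quot (rr p q n) (L_pq p q) \<inter> words_len p h \<longleftrightarrow> u \<in> CC p q h n" for u
  proof -
    have "u \<in> left_quot (rr p q n) (L_pq p q) \<inter> words_len p h \<longleftrightarrow> (rr p q n @ u \<in> range (rr p q)) \<and> u \<in> words_len p h"
      by (simp add: left_quot_def L_eq)
    also have "\<dots> \<longleftrightarrow> (set u \<subseteq> {..<p} \<and> q^length u dvd p^length u * n + NN p q u) \<and> u \<in> words_len p h"
      using ok_iff[OF n] ok_dvd by simp
    also have "\<dots> \<longleftrightarrow> u \<in> CC p q h n" using W_set[of u h] unfolding CC_def by auto
    finally show ?thesis .
  qed
  then show ?thesis by blast
qed

lemma fam_eq: "{left_quot w (L_pq p q) \<inter> words_len p h | w. w \<in> L_pq p q - {[]}} = CC p q h ` {0<..}"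
proof -
  have L: "L_pq p q - {[]} = rr p q ` {0<..}" unfolding L_eq by auto
  have "{left_quot w (L_pq p q) \<inter> words_len p h | w. w \<in> L_pq p q - {[]}} = (\<lambda>w. left_quot w (L_pq p q) \<inter> words_len p h) ` (L_pq p q - {[]})"
    by blast
  also have "\<dots> = (\<lambda>n. left_quot (rr p q n) (L_pq p q) \<inter> words_len p h) ` {0<..}"
    unfolding L by (simp add: image_image)
  also have "\<dots> = CC p q h ` {0<..}"
    using quot_eq by (intro image_cong) auto
  finally show ?thesis .
qed

lemma CC_mod: "n mod q^h = n' mod q^h \<Longrightarrow> CC p q h n = CC p q h n'"
proof -
  assume "n mod q^h = n' mod q^h"
  then have c: "[n = n'] (mod q^h)" by (simp add: cong_def)
  have "[p^h*n + N = p^h*n' + N] (mod q^h)" for N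
    by (intro cong_add cong_mult cong_refl c)
  then have "q^h dvd p^h*n + N \<longleftrightarrow> q^h dvd p^h*n' + N" for N
    by (rule cong_dvd_iff)
  then show ?thesis unfolding CC_def by simp
qed

lemma CC_inter: "u \<in> CC p q h n \<Longrightarrow> u \<in> CC p q h n' \<Longrightarrow> n mod q^h = n' mod q^h"
proof -
  assume "u \<in> CC p q h n" "u \<in> CC p q h n'"
  then have "[p^h*n + NN p q u = 0] (mod q^h)" "[p^h*n' + NN p q u = 0] (mod q^h)"
    unfolding CC_def by (auto simp: cong_0_iff)
  then have "[p^h*n + NN p q u = p^h*n' + NN p q u] (mod q^h)" by (meson cong_sym cong_trans)
  then have "[p^h*n = p^h*n'] (mod q^h)" by (simp add: cong_add_rcancel_nat)
  moreover have "coprime (p^h) (q^h)" using cop by simp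
  ultimately have "[n = n'] (mod q^h)" using cong_mult_lcancel_nat by blast
  then show ?thesis by (simp add: cong_def)
qed

lemma CC_nonempty: "n > 0 \<Longrightarrow> CC p q h n \<noteq> {}"
proof -
  assume "n > 0"
  then obtain u where u: "length u = h" "okc p q n u" using ok_exists by blast
  then have "set u \<subseteq> {..<p} \<and> q^h dvd p^h*n + NN p q u" using ok_dvd by simp
  then have "u \<in> CC p q h n" using u unfolding CC_def words_len_def alph_def by auto
  then show ?thesis by auto
qed

lemma CC_cover: "u \<in> words_len p h \<Longrightarrow> \<exists>n>0. u \<in> CC p q h n"
proof -
  assume u: "u \<in> words_len p h"
  define M where "M = q^h"
  define N where "N = NN p q u"
  have M0: "M > 0" using q1 unfolding M_def by simp
  have "coprime (p^h) M" using cop unfolding M_def by simp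
  then obtain x where x: "[p^h * x = 1] (mod M)" using cong_solve_coprime_nat[of "p^h" M] by auto
  then have "[int (p^h * x) = int 1] (mod int M)" using cong_int_iff by blast
  then obtain t where t: "int 1 = int (p^h*x) + int M * t" using cong_iff_lin by blast
  define M1 where "M1 = M - 1"
  have iM: "int M = int M1 + 1" using M0 unfolding M1_def by simp
  define n where "n = x*M1*N + M"
  have n0: "n > 0" using M0 unfolding n_def by simp
  have px: "int (p^h*x) = 1 - int M * t" using t by simp
  have "int (p^h*n + N) = int (p^h*x) * int M1 * int N + int (p^h) * int M + int N"
    unfolding n_def by (simp add: algebra_simps)
  also have "\<dots> = int M * (int N - t * int M1 * int N + int (p^h))"
    unfolding px iM by (simp add: algebra_simps)
  finally have "int M dvd int (p^h*n + N)" by simp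
  then have "M dvd p^h*n + N" by (simp only: int_dvd_int_iff)
  then have "u \<in> CC p q h n" using u unfolding CC_def M_def N_def by simp
  then show ?thesis using n0 by blast
qed

lemma main: "partition_on (words_len p h) (CC p q h ` {0<..}) \<and> card (CC p q h ` {0<..}) = q ^ h"
proof -
  define M where "M = q^h"
  have M0: "M > 0" using q1 unfolding M_def by simp
  have img: "CC p q h ` {0<..} = CC p q h ` {M..<2*M}"
  proof
    show "CC p q h ` {0<..} \<subseteq> CC p q h ` {M..<2*M}"
    proof
      fix X assume "X \<in> CC p q h ` {0<..}"
      then obtain n where n: "X = CC p q h n" by auto
      have "n mod M = (M + n mod M) mod M" by simp
      then have "CC p q h n = CC p q h (M + n mod M)" unfolding M_def by (rule CC_mod)
      then have "X = CC p q h (M + n mod M)" using n by simp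
      moreover have "M + n mod M \<in> {M..<2*M}" using M0 by simp
      ultimately show "X \<in> CC p q h ` {M..<2*M}" by blast
    qed
  next
    have "{M..<2*M} \<subseteq> {0<..}" using M0 by auto
    then show "CC p q h ` {M..<2*M} \<subseteq> CC p q h ` {0<..}" by (rule image_mono)
  qed
  have inj: "inj_on (CC p q h) {M..<2*M}"
  proof
    fix n n' assume n: "n \<in> {M..<2*M}" and n': "n' \<in> {M..<2*M}" and e: "CC p q h n = CC p q h n'"
    have "n > 0" using n M0 by simp
    then obtain u where u: "u \<in> CC p q h n" using CC_nonempty[where n=n and h=h] by blast
    then have u': "u \<in> CC p q h n'" using e by simp
    have "n mod M = n' mod M" using CC_inter[OF u u'] unfolding M_def .
    moreover have "k = M + k mod M" if "k \<in> {M..<2*M}" for k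
    proof -
      have k: "k = M + (k - M)" "k - M < M" using that by auto
      have "k mod M = (k - M) mod M" by (subst k(1)) simp
      also have "\<dots> = k - M" using k(2) by simp
      finally show ?thesis using that by simp
    qed
    then have "n = M + n mod M" "n' = M + n' mod M" using n n' by blast+
    ultimately show "n = n'" by simp
  qed
  have card: "card (CC p q h ` {0<..}) = q^h"
    unfolding img using card_image[OF inj] M_def by simp
  have part: "partition_on (words_len p h) (CC p q h ` {0<..})"
    unfolding partition_on_def disjoint_def
  proof (intro conjI ballI impI)
    have "CC p q h n \<subseteq> words_len p h" for n unfolding CC_def by blast
    moreover have "u \<in> \<Union> (CC p q h ` {0<..})" if "u \<in> words_len p h" for u
      using CC_cover[OF that] by blast
    ultimately show "\<Union> (CC p q h ` {0<..}) = words_len p h" by blast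
  next
    fix A B assume A: "A \<in> CC p q h ` {0<..}" and B: "B \<in> CC p q h ` {0<..}" and ne: "A \<noteq> B"
    then obtain n n' where "A = CC p q h n" "B = CC p q h n'" by auto
    then have AB: "A = CC p q h n" "B = CC p q h n'" .
    show "A \<inter> B = {}"
    proof (rule ccontr)
      assume "A \<inter> B \<noteq> {}"
      then obtain u where u: "u \<in> CC p q h n" "u \<in> CC p q h n'" using AB by blast
      have "n mod q^h = n' mod q^h" by (rule CC_inter[OF u])
      then have "A = B" unfolding AB by (rule CC_mod)
      then show False using ne by simp
    qed
  next
    show "{} \<notin> CC p q h ` {0<..}"
    proof
      assume "{} \<in> CC p q h ` {0<..}"
      then obtain n where "n > 0" "{} = CC p q h n" by auto
      then show False using CC_nonempty[where n=n and h=h] by simp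
    qed
  qed
  show ?thesis using part card by simp
qed

end

theorem mainTheorem9:
  fixes p q h :: nat
  assumes "q > 1" and "p > q" and "coprime p q"
  shows "partition_on (words_len p h)
           {left_quot w (L_pq p q) \<inter> words_len p h | w. w \<in> L_pq p q - {[]}}
         \<and> card {left_quot w (L_pq p q) \<inter> words_len p h | w. w \<in> L_pq p q - {[]}} = q ^ h"
proof -
  interpret rb p q using assms by unfold_locales
  show ?thesis unfolding fam_eq by (rule main)
qed

end
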